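(* Let $(n_k)_{k\ge0}$ be a strictly increasing sequence of nonnegative integers. Then $(y_{n_k})_{k\ge0}$ is a Stieltjes moment sequence for every Stieltjes moment sequence $(y_n)_{n\ge0}$ if and only if there exist $d,\ell\in\mathbb{N}$ such that $n_k=dk+\ell$ for all $k\in\mathbb{N}$.
   Context: A Stieltjes moment sequence is a sequence $y$ for which there is a nonnegative Borel measure $\mu$ supported in $[0,\infty)$ with $y_n=\int x^n\,d\mu$ for all $n\ge0$. $\mathbb{N}=\{0,1,2,\dots\}$. *)

theory Defs
  imports "HOL-Analysis.Analysis"
begin

definition stieltjes_moment_seq :: "(nat \<Rightarrow> real) \<Rightarrow> bool" where
  "stieltjes_moment_seq y \<longleftrightarrow>
     (\<exists>M :: real measure. sets M = sets borel \<and> emeasure M {..<0} = 0 \<and>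
        (\<forall>n. integrable M (\<lambda>x. x ^ n) \<and> y n = (\<integral>x. x ^ n \<partial>M)))"

end

theory Submission
  imports Defs "HOL-Probability.Probability"
begin

lemma dirac_stieltjes:
  fixes x :: real assumes x: "0 \<le> x"
  shows "stieltjes_moment_seq (\<lambda>m. x ^ m)"
  unfolding stieltjes_moment_seq_def
proof (intro exI[of _ "return borel x"] conjI allI)
  show "sets (return borel x) = sets borel" by simp
  show "emeasure (return borel x) {..<0} = 0" using x by simp
  fix m :: nat
  interpret prob_space "return borel x" by (rule prob_space_return) simp
  have "integrable (return borel x) (\<lambda>_. x ^ m)" by simp
  moreover have "AE t in return borel x. x ^ m = t ^ m"
    by (simp add: AE_return)
  ultimately show "integrable (return borel x) (\<lambda>t. t ^ m)"
    by (subst integrable_cong_AE[where g="\<lambda>_. x ^ m"]) auto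
  show "x ^ m = (\<integral>t. t ^ m \<partial>return borel x)"
    by (subst integral_return) auto
qed

lemma stieltjes_cs:
  assumes "stieltjes_moment_seq z"
  shows "(z (Suc j))^2 \<le> z j * z (Suc (Suc j))"
proof -
  obtain M :: "real measure" where sM: "sets M = sets borel" and e0: "emeasure M {..<0} = 0"
    and I: "\<And>m. integrable M (\<lambda>x. x ^ m) \<and> z m = (\<integral>x. x ^ m \<partial>M)"
    using assms unfolding stieltjes_moment_seq_def by blast
  have AE: "AE x in M. 0 \<le> x"
  proof (rule AE_I')
    show "{..<0::real} \<in> null_sets M" using e0 sM by (simp add: null_sets_def)
    show "{x \<in> space M. \<not> 0 \<le> x} \<subseteq> {..<0}" by auto
  qed
  have key: "0 \<le> z (Suc (Suc j)) - 2 * c * z (Suc j) + c^2 * z j" for c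
  proof -
    have "0 \<le> (\<integral>x. x ^ Suc (Suc j) - (2*c) * x ^ Suc j + c^2 * x ^ j \<partial>M)"
    proof (rule integral_nonneg_AE)
      show "AE x in M. 0 \<le> x ^ Suc (Suc j) - (2*c) * x ^ Suc j + c^2 * x ^ j"
        using AE
      proof eventually_elim
        case (elim x)
        have "x ^ Suc (Suc j) - (2*c) * x ^ Suc j + c^2 * x ^ j = x^j * (x - c)^2"
          by (simp add: power2_eq_square algebra_simps)
        also have "\<dots> \<ge> 0" using elim by simp
        finally show ?case .
      qed
    qed
    also have "\<dots> = z (Suc (Suc j)) - 2 * c * z (Suc j) + c^2 * z j"
      using I[of j] I[of "Suc j"] I[of "Suc (Suc j)"]
      by (simp add: integral_add integral_diff)
    finally show ?thesis .
  qed
  have zj: "0 \<le> z j"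
  proof -
    have "0 \<le> (\<integral>x. x ^ j \<partial>M)" by (rule integral_nonneg_AE) (use AE in eventually_elim, auto)
    thus ?thesis using I[of j] by simp
  qed
  show ?thesis
  proof (cases "z j = 0")
    case True
    show ?thesis
    proof (cases "z (Suc j) = 0")
      case True thus ?thesis using \<open>z j = 0\<close> by simp
    next
      case False
      have "0 \<le> z (Suc (Suc j)) - 2 * ((z (Suc (Suc j)) + 1) / (2 * z (Suc j))) * z (Suc j)"
        using key[of "(z (Suc (Suc j)) + 1) / (2 * z (Suc j))"] True by simp
      also have "\<dots> = -1" using False by (simp add: field_simps)
      finally show ?thesis by simp
    qed
  next
    case False
    hence pos: "z j > 0" using zj by simp
    have "0 \<le> z (Suc (Suc j)) - 2 * (z (Suc j) / z j) * z (Suc j) + (z (Suc j) / z j)^2 * z j"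
      by (rule key)
    also have "\<dots> = (z j * z (Suc (Suc j)) - (z (Suc j))^2) / z j"
      using pos by (simp add: field_simps power2_eq_square)
    finally show ?thesis using pos by (simp add: divide_nonneg_pos zero_le_divide_iff)
  qed
qed

lemma arith_stieltjes:
  assumes "stieltjes_moment_seq y"
  shows "stieltjes_moment_seq (\<lambda>k. y (d * k + l))"
proof -
  obtain M :: "real measure" where sM[measurable_cong]: "sets M = sets borel" and e0: "emeasure M {..<0} = 0"
    and I: "\<And>m. integrable M (\<lambda>x. x ^ m) \<and> y m = (\<integral>x. x ^ m \<partial>M)"
    using assms unfolding stieltjes_moment_seq_def by blast
  have AE: "AE x in M. 0 \<le> x"
  proof (rule AE_I')
    show "{..<0::real} \<in> null_sets M" using e0 sM by (simp add: null_sets_def)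
    show "{x \<in> space M. \<not> 0 \<le> x} \<subseteq> {..<0}" by auto
  qed
  have AEg: "AE x in M. 0 \<le> x ^ l" using AE by eventually_elim simp
  define D where "D = density M (\<lambda>x. ennreal (x ^ l))"
  have sD[measurable_cong]: "sets D = sets borel" unfolding D_def using sM by simp
  define N where "N = distr D borel (\<lambda>x. x ^ d)"
  have mp: "(\<lambda>x::real. x ^ d) \<in> measurable D borel" by measurable
  have "stieltjes_moment_seq (\<lambda>k. y (d * k + l))"
    unfolding stieltjes_moment_seq_def
  proof (intro exI[of _ N] conjI allI)
    show "sets N = sets borel" unfolding N_def by simp
    have A: "(\<lambda>x::real. x ^ d) -` {..<0} \<inter> space M \<in> sets M"
      using measurable_sets[OF mp, of "{..<0}"] by (simp add: D_def)
    have B: "AE x in M. x \<in> (\<lambda>x::real. x ^ d) -` {..<0} \<inter> space M \<longrightarrow> x ^ l = 0"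
      using AE by eventually_elim auto
    have "(\<lambda>x::real. x ^ d) -` {..<0} \<inter> space D \<in> null_sets D"
      unfolding D_def using A B AEg by (subst null_sets_density_iff) auto
    thus "emeasure N {..<0} = 0"
      unfolding N_def using mp by (subst emeasure_distr) (auto simp: null_sets_def)
    fix k :: nat
    have eq: "(\<lambda>x::real. x ^ l *\<^sub>R (x ^ d) ^ k) = (\<lambda>x. x ^ (d * k + l))"
      by (auto simp: power_mult[symmetric] power_add mult.commute)
    have "integrable N (\<lambda>t. t ^ k) \<longleftrightarrow> integrable D (\<lambda>x. (x ^ d) ^ k)"
      unfolding N_def using mp by (subst integrable_distr_eq) auto
    also have "\<dots> \<longleftrightarrow> integrable M (\<lambda>x. x ^ l *\<^sub>R (x ^ d) ^ k)"
      unfolding D_def by (rule integrable_density) (use AEg in auto)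
    finally show "integrable N (\<lambda>t. t ^ k)" using I eq by simp
    have "(\<integral>t. t ^ k \<partial>N) = (\<integral>x. (x ^ d) ^ k \<partial>D)"
      unfolding N_def using mp by (subst integral_distr) auto
    also have "\<dots> = (\<integral>x. x ^ l *\<^sub>R (x ^ d) ^ k \<partial>M)"
      unfolding D_def by (rule integral_density) (use AEg in auto)
    finally show "y (d * k + l) = (\<integral>t. t ^ k \<partial>N)" using I eq by simp
  qed
  thus ?thesis .
qed

theorem theorem4p3:
  fixes n :: "nat \<Rightarrow> nat"
  assumes "strict_mono n"
  shows "(\<forall>y. stieltjes_moment_seq y \<longrightarrow> stieltjes_moment_seq (\<lambda>k. y (n k)))
         \<longleftrightarrow> (\<exists>d l :: nat. \<forall>k. n k = d * k + l)"
proof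
  assume H: "\<forall>y. stieltjes_moment_seq y \<longrightarrow> stieltjes_moment_seq (\<lambda>k. y (n k))"
  have ineq: "((x::real) ^ n (Suc k)) ^ 2 \<le> x ^ n k * x ^ n (Suc (Suc k))" if "0 \<le> x" for x k
    using stieltjes_cs[OF H[rule_format, OF dirac_stieltjes[OF that]], of k] by simp
  have E: "n (Suc (Suc k)) + n k = 2 * n (Suc k)" for k
  proof -
    have "(2::real) ^ (n (Suc k) * 2) \<le> 2 ^ (n k + n (Suc (Suc k)))"
      using ineq[of 2 k] by (simp add: power_mult power_add)
    hence a: "n (Suc k) * 2 \<le> n k + n (Suc (Suc k))" by simp
    have "(1/2::real) ^ (n (Suc k) * 2) \<le> (1/2) ^ (n k + n (Suc (Suc k)))"
      using ineq[of "1/2" k] by (simp add: power_mult power_add)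
    hence b: "n k + n (Suc (Suc k)) \<le> n (Suc k) * 2" by (subst (asm) power_decreasing_iff) auto
    show ?thesis using a b by simp
  qed
  have n01: "n 0 < n 1" using assms by (simp add: strict_mono_def)
  define d where "d = n 1 - n 0"
  have step: "n (Suc k) = n k + d" for k
  proof (induction k)
    case 0 thus ?case using n01 by (simp add: d_def)
  next
    case (Suc k) thus ?case using E[of k] by simp
  qed
  have "n k = d * k + n 0" for k
  proof (induction k)
    case (Suc k) thus ?case using step[of k] by simp
  qed simp
  thus "\<exists>d l :: nat. \<forall>k. n k = d * k + l" by blast
next
  assume "\<exists>d l :: nat. \<forall>k. n k = d * k + l"
  then obtain d l where "\<forall>k. n k = d * k + l" by blast
  thus "\<forall>y. stieltjes_moment_seq y \<longrightarrow> stieltjes_moment_seq (\<lambda>k. y (n k))"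
    using arith_stieltjes by auto
qed

end
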